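(* Let $d>d'\ge1$ and $\varepsilon,\varepsilon',p>0$. Then the measure $m_p$ on $E=\mathbb{R}^d_\varepsilon\cup\mathbb{R}^{d'}_{\varepsilon'}\cup\{a^*\}$ does not have the volume doubling property with respect to $\rho$: there is no constant $C>0$ such that $m_p(B(x;2r))\le C\,m_p(B(x;r))$ for all $x\in E$ and all $r>0$, where $B(x;r)=\{y\in E:\rho(x,y)<r\}$.
   Context: For $k\ge2$, $\mathbb{R}^k_r=\{x\in\mathbb{R}^k:|x|>r\}$; $\mathbb{R}^1_r=(0,\infty)$. The space $E$ is obtained by placing $\mathbb{R}^d$ and $\mathbb{R}^{d'}$ along complementary coordinates of $\mathbb{R}^{d+d'}$ and identifying $\{x\in\mathbb{R}^d:|x|\le\varepsilon\}$ and $\{x\in\mathbb{R}^{d'}:|x|\le\varepsilon'\}$ (the point $0$ if $d'=1$) with a single point $a^*$. $m_p(A)=m^{(d)}(A\cap\mathbb{R}^d)+p\,m^{(d')}(A\cap\mathbb{R}^{d'})$ with Lebesgue measures $m^{(k)}$. $|x|_\rho=|x|-\varepsilon$ on $\mathbb{R}^d_\varepsilon$, $|x|_\rho=|x|-\varepsilon'$ on $\mathbb{R}^{d'}_{\varepsilon'}$ ($|x|_\rho=|x|$ on $(0,\infty)$ if $d'=1$), $|a^*|_\rho=0$; $\rho(x,y)=(|x|_\rho+|y|_\rho)\wedge|x-y|$ with $|x-y|:=\infty$ if one point lies in $\mathbb{R}^d_\varepsilon\cup\{a^*\}$ and the other in $\mathbb{R}^{d'}_{\varepsilon'}\cup\{a^*\}$.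 *)

theory Defs
  imports "HOL-Analysis.Analysis"
begin

text \<open>Points of the space E: a point of R^d (L), a point of R^{d'} (R), or the glued point a*.
  Dimensions d = CARD('n), d' = CARD('m).\<close>
datatype ('n, 'm) gpt = GL "real^'n" | GR "real^'m" | Star

definition ext_region :: "real \<Rightarrow> ('k::finite) set \<Rightarrow> (real^'k) set" where
  "ext_region r (I :: 'k set) =
     (if CARD('k) = 1 then {x. \<forall>i. x $ i > 0} else {x. norm x > r})"

definition gspace :: "real \<Rightarrow> real \<Rightarrow> ('n::finite, 'm::finite) gpt set" where
  "gspace eps eps' =
     GL ` ext_region eps (UNIV :: 'n set) \<union> GR ` ext_region eps' (UNIV :: 'm set) \<union> {Star}"

fun rnorm :: "real \<Rightarrow> real \<Rightarrow> ('n::finite, 'm::finite) gpt \<Rightarrow> real" where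
  "rnorm eps eps' (GL x) = norm x - eps"
| "rnorm eps eps' (GR y) = (if CARD('m) = 1 then norm y else norm y - eps')"
| "rnorm eps eps' Star = 0"

text \<open>The metric rho(x,y) = (|x|_rho + |y|_rho) min |x - y|, with |x - y| = oo across the
  two pieces (and whenever a* is involved, except rho(a*,a*) = 0).\<close>
fun grho :: "real \<Rightarrow> real \<Rightarrow> ('n::finite, 'm::finite) gpt \<Rightarrow> ('n, 'm) gpt \<Rightarrow> real" where
  "grho eps eps' (GL x) (GL y) = min (rnorm eps eps' (GL x :: ('n,'m) gpt) + rnorm eps eps' (GL y :: ('n,'m) gpt)) (norm (x - y))"
| "grho eps eps' (GR x) (GR y) = min (rnorm eps eps' (GR x :: ('n,'m) gpt) + rnorm eps eps' (GR y :: ('n,'m) gpt)) (norm (x - y))"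
| "grho eps eps' a b = rnorm eps eps' a + rnorm eps eps' b"

definition gball :: "real \<Rightarrow> real \<Rightarrow> ('n::finite, 'm::finite) gpt \<Rightarrow> real \<Rightarrow> ('n, 'm) gpt set" where
  "gball eps eps' x r = {y \<in> gspace eps eps'. grho eps eps' x y < r}"

definition mp :: "real \<Rightarrow> ('n::finite, 'm::finite) gpt set \<Rightarrow> ennreal" where
  "mp p A = emeasure lborel (GL -` A) + ennreal p * emeasure lborel (GR -` A)"

end

theory Submission
  imports Defs
begin

theorem proposition2p3:
  fixes eps eps' p :: real
  assumes "CARD('n::finite) > CARD('m::finite)"
    and "eps > 0" and "eps' > 0" and "p > 0"
  shows "\<not> (\<exists>C::real. C > 0 \<and>
            (\<forall>x \<in> (gspace eps eps' :: ('n, 'm) gpt set). \<forall>r > 0.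
               mp p (gball eps eps' x (2 * r)) \<le> ennreal C * mp p (gball eps eps' x r)))"
proof
  assume "\<exists>C::real. C > 0 \<and>
            (\<forall>x \<in> (gspace eps eps' :: ('n, 'm) gpt set). \<forall>r > 0.
               mp p (gball eps eps' x (2 * r)) \<le> ennreal C * mp p (gball eps eps' x r))"
  then obtain C where C: "C > 0" and H: "\<forall>x \<in> (gspace eps eps' :: ('n, 'm) gpt set). \<forall>r > 0.
               mp p (gball eps eps' x (2 * r)) \<le> ennreal C * mp p (gball eps eps' x r)" by blast
  define d where "d = CARD('n)"
  define d' where "d' = CARD('m)"
  have dd0: "d > d'" "d' \<ge> 1" using assms(1) unfolding d_def d'_def
    using finite_UNIV_card_ge_0 by fastforce+
  have dd: "d > d'" "d' \<ge> 1" "d \<ge> 2" using dd0 by auto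
  have cn: "CARD('n) \<noteq> 1" using dd d_def by simp
  define Vn where "Vn = unit_ball_vol (real d)"
  define Vm where "Vm = unit_ball_vol (real d')"
  have Vn: "Vn > 0" and Vm: "Vm > 0" unfolding Vn_def Vm_def by simp_all
  define K where "K = C * p * Vm * 2 ^ d / Vn"
  have K: "K > 0" unfolding K_def using C assms Vn Vm by simp
  define a where "a = K + 2 + eps'"
  define y :: "real^'m" where "y = (\<chi> i. a)"
  have ny: "norm y \<ge> a" using component_le_norm_cart[of y] unfolding y_def
    by (metis vec_lambda_beta abs_ge_self order_trans)
  have yE: "y \<in> ext_region eps' (UNIV :: 'm set)"
    using ny K assms unfolding ext_region_def y_def a_def by auto
  have xS: "(GR y :: ('n,'m) gpt) \<in> gspace eps eps'" unfolding gspace_def using yE by auto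
  define t where "t = rnorm eps eps' (GR y :: ('n,'m) gpt)"
  have tge: "t \<ge> a - eps'" unfolding t_def using ny assms by auto
  have t1: "t > 1" "t > K" using tge K unfolding a_def by auto
  have Hyp: "mp p (gball eps eps' (GR y :: ('n,'m) gpt) (2 * t)) \<le> ennreal C * mp p (gball eps eps' (GR y :: ('n,'m) gpt) t)"
    using H xS t1 by auto
  have L0: "GL -` gball eps eps' (GR y :: ('n,'m) gpt) t = {}"
  proof (rule ccontr)
    assume "GL -` gball eps eps' (GR y :: ('n,'m) gpt) t \<noteq> {}"
    then obtain z where z: "(GL z :: ('n,'m) gpt) \<in> gball eps eps' (GR y) t" by auto
    then have "z \<in> ext_region eps (UNIV :: 'n set)"
      unfolding gball_def gspace_def by auto
    then have "norm z > eps" using cn unfolding ext_region_def by auto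
    with z show False unfolding gball_def t_def by auto
  qed
  have R0: "GR -` gball eps eps' (GR y :: ('n,'m) gpt) t \<subseteq> ball y t"
  proof
    fix z assume z: "z \<in> GR -` gball eps eps' (GR y :: ('n,'m) gpt) t"
    then have zE: "z \<in> ext_region eps' (UNIV :: 'm set)"
      unfolding gball_def gspace_def by auto
    have "rnorm eps eps' (GR z :: ('n,'m) gpt) \<ge> 0"
      using zE unfolding ext_region_def by (auto split: if_splits)
    moreover have "grho eps eps' (GR y :: ('n,'m) gpt) (GR z) < t" using z unfolding gball_def by auto
    moreover have "grho eps eps' (GR y :: ('n,'m) gpt) (GR z) = min (t + rnorm eps eps' (GR z :: ('n,'m) gpt)) (norm (y - z))"
      unfolding t_def by simp
    ultimately have "norm (y - z) < t" by linarith
    then show "z \<in> ball y t" by (simp add: dist_norm)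
  qed
  have "mp p (gball eps eps' (GR y :: ('n,'m) gpt) t) \<le> ennreal p * emeasure lborel (ball y t)"
    unfolding mp_def L0 using R0
    by (simp add: emeasure_mono mult_left_mono)
  also have "emeasure lborel (ball y t) = ennreal (Vm * t ^ d')"
    using t1 by (simp add: emeasure_ball Vm_def d'_def)
  finally have up: "mp p (gball eps eps' (GR y :: ('n,'m) gpt) t) \<le> ennreal (p * (Vm * t ^ d'))"
    using assms Vm t1 ennreal_mult[of p "Vm * t ^ d'"] by simp
  define u :: "real^'n" where "u = (\<chi> i. 1)"
  have nu: "norm u > 0" unfolding u_def
    by (metis norm_eq_zero order_less_le norm_ge_zero vec_lambda_beta zero_index zero_neq_one)
  define c where "c = ((eps + t/2) / norm u) *\<^sub>R u"
  have nc: "norm c = eps + t/2" unfolding c_def using nu assms t1 by simp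
  have LB: "ball c (t/2) \<subseteq> GL -` gball eps eps' (GR y :: ('n,'m) gpt) (2 * t)"
  proof
    fix z assume "z \<in> ball c (t/2)"
    then have zc: "norm (z - c) < t/2" by (simp add: dist_norm norm_minus_commute)
    have "norm c - norm z \<le> norm (z - c)" using norm_triangle_ineq2[of c z] by (simp add: norm_minus_commute)
    then have z1: "norm z > eps" using zc nc by linarith
    have "norm z - norm c \<le> norm (z - c)" using norm_triangle_ineq2[of z c] by simp
    then have z2: "norm z < eps + t" using zc nc by linarith
    have "(GL z :: ('n,'m) gpt) \<in> gspace eps eps'"
      unfolding gspace_def ext_region_def using z1 cn by auto
    then show "z \<in> GL -` gball eps eps' (GR y :: ('n,'m) gpt) (2 * t)"
      unfolding gball_def t_def using z2 t_def by auto
  qed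
  have "ennreal (Vn * (t/2) ^ d) = emeasure lborel (ball c (t/2))"
    using t1 by (simp add: emeasure_ball Vn_def d_def)
  also have "\<dots> \<le> emeasure lborel (GL -` gball eps eps' (GR y :: ('n,'m) gpt) (2 * t))"
  proof (rule emeasure_mono[OF LB])
    have "GL -` gball eps eps' (GR y :: ('n,'m) gpt) (2 * t) = ball 0 (eps + t) - cball 0 eps"
      unfolding gball_def gspace_def ext_region_def using cn by (auto simp: t_def)
    then show "GL -` gball eps eps' (GR y :: ('n,'m) gpt) (2 * t) \<in> sets lborel" by simp
  qed
  also have "\<dots> \<le> mp p (gball eps eps' (GR y :: ('n,'m) gpt) (2 * t))"
    unfolding mp_def by simp
  also note Hyp
  also have "ennreal C * mp p (gball eps eps' (GR y :: ('n,'m) gpt) t) \<le> ennreal C * ennreal (p * (Vm * t ^ d'))"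
    using up by (simp add: mult_left_mono)
  finally have "ennreal (Vn * (t/2) ^ d) \<le> ennreal (C * (p * (Vm * t ^ d')))"
    using C assms Vm t1 ennreal_mult[of C "p * (Vm * t ^ d')"] by simp
  then have ineq: "Vn * (t/2) ^ d \<le> C * (p * (Vm * t ^ d'))"
    using C assms Vm t1 ennreal_le_iff[of "C * (p * (Vm * t ^ d'))" "Vn * (t/2) ^ d"] by simp
  have tp: "t ^ (d - d') \<ge> t" using t1 dd
    using power_increasing[of 1 "d - d'" t] by simp
  have td: "t ^ d = t ^ d' * t ^ (d - d')" using dd power_add[of t d' "d - d'"] by simp
  have "Vn * (t/2) ^ d = Vn * t ^ d' * t ^ (d - d') / 2 ^ d" using td by (simp add: power_divide)
  also have "\<dots> > Vn * t ^ d' * K / 2 ^ d"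
    using tp t1 Vn by (intro divide_strict_right_mono mult_strict_left_mono) auto
  also have "Vn * t ^ d' * K / 2 ^ d = C * (p * (Vm * t ^ d'))"
    unfolding K_def using Vn by (simp add: field_simps)
  finally show False using ineq by simp
qed

end
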